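(* A $T_1$-space $X$ has a regular base at non-isolated points if and only if $X$ has a strong development at non-isolated points.
   Context: $I(X)$ is the set of isolated points of $X$, $\mathcal{I}(X)=\{\{x\}:x\in I(X)\}$, $\mathrm{st}(A,\mathcal{W})=\bigcup\{W\in\mathcal{W}:W\cap A\neq\emptyset\}$. A base $\mathcal{B}$ is regular at $x$ if for every neighborhood $U$ of $x$ there is an open $V$ with $x\in V\subset U$ such that $\{B\in\mathcal{B}: B\cap V\neq\emptyset,\ B\not\subset U\}$ is finite; it is a regular base at non-isolated points if it is regular at every $x\in X\setminus I(X)$. A sequence $\{\mathcal{W}_i\}_{i\in\mathbb{N}}$ of open covers of $X$ with $\mathcal{I}(X)\subset\bigcup_i\mathcal{W}_i$ is a strong development at non-isolated points if for every $x\in X\setminus I(X)$ and every neighborhood $U$ of $x$ there are a neighborhood $V$ of $x$ and $i\in\mathbb{N}$ with $\mathrm{st}(V,\mathcal{W}_i)\subset U$. *)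

theory Defs
  imports "HOL-Analysis.Analysis"
begin

definition isolated_pts :: "'a topology \<Rightarrow> 'a set" where
  "isolated_pts X = {x \<in> topspace X. openin X {x}}"

definition nbhd :: "'a topology \<Rightarrow> 'a \<Rightarrow> 'a set \<Rightarrow> bool" where
  "nbhd X x N \<longleftrightarrow> N \<subseteq> topspace X \<and> (\<exists>W. openin X W \<and> x \<in> W \<and> W \<subseteq> N)"

definition is_base :: "'a topology \<Rightarrow> 'a set set \<Rightarrow> bool" where
  "is_base X \<B> \<longleftrightarrow> (\<forall>B\<in>\<B>. openin X B) \<and>
     (\<forall>U x. openin X U \<and> x \<in> U \<longrightarrow> (\<exists>B\<in>\<B>. x \<in> B \<and> B \<subseteq> U))"

definition regular_at :: "'a topology \<Rightarrow> 'a set set \<Rightarrow> 'a \<Rightarrow> bool" where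
  "regular_at X \<B> x \<longleftrightarrow> (\<forall>U. nbhd X x U \<longrightarrow>
     (\<exists>V. openin X V \<and> x \<in> V \<and> V \<subseteq> U \<and>
          finite {B \<in> \<B>. B \<inter> V \<noteq> {} \<and> \<not> B \<subseteq> U}))"

definition has_regular_base_nonisol :: "'a topology \<Rightarrow> bool" where
  "has_regular_base_nonisol X \<longleftrightarrow> (\<exists>\<B>. is_base X \<B> \<and>
     (\<forall>x \<in> topspace X - isolated_pts X. regular_at X \<B> x))"

definition star :: "'a set \<Rightarrow> 'a set set \<Rightarrow> 'a set" where
  "star A \<W> = \<Union>{W \<in> \<W>. W \<inter> A \<noteq> {}}"

definition open_cover :: "'a topology \<Rightarrow> 'a set set \<Rightarrow> bool" where
  "open_cover X \<W> \<longleftrightarrow> (\<forall>W\<in>\<W>. openin X W) \<and> \<Union>\<W> = topspace X"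

definition strong_dev_nonisol :: "'a topology \<Rightarrow> (nat \<Rightarrow> 'a set set) \<Rightarrow> bool" where
  "strong_dev_nonisol X \<W> \<longleftrightarrow> (\<forall>i. open_cover X (\<W> i)) \<and>
     (\<forall>x \<in> isolated_pts X. {x} \<in> (\<Union>i. \<W> i)) \<and>
     (\<forall>x \<in> topspace X - isolated_pts X. \<forall>U. nbhd X x U \<longrightarrow>
        (\<exists>V i. nbhd X x V \<and> star V (\<W> i) \<subseteq> U))"

definition has_strong_dev_nonisol :: "'a topology \<Rightarrow> bool" where
  "has_strong_dev_nonisol X \<longleftrightarrow> (\<exists>\<W>. strong_dev_nonisol X \<W>)"

end

theory Submission
  imports Defs
begin

lemma nbhd_open: "openin X U \<Longrightarrow> x \<in> U \<Longrightarrow> nbhd X x U"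
  unfolding nbhd_def using openin_subset by blast

lemma nbhd_mem: "nbhd X x U \<Longrightarrow> x \<in> U"
  unfolding nbhd_def by blast

lemma star_mono_set: "A \<subseteq> B \<Longrightarrow> star A \<G> \<subseteq> star B \<G>"
  unfolding star_def by blast

lemma star_sym: "b \<in> star {a} \<G> \<longleftrightarrow> a \<in> star {b} \<G>"
  unfolding star_def by blast

lemma star_step: "a \<in> star A \<G> \<Longrightarrow> b \<in> star {a} \<G> \<Longrightarrow> b \<in> star (star A \<G>) \<G>"
  unfolding star_def by blast

lemma star_incl: "A \<subseteq> \<Union>\<G> \<Longrightarrow> A \<subseteq> star A \<G>"
  unfolding star_def by blast

lemma choice_cover:
  "\<exists>c. (\<forall>x\<in>\<Union>C. c x \<in> C \<and> x \<in> c x) \<and>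
       (\<forall>x x'. x \<in> \<Union>C \<longrightarrow> x' \<in> \<Union>C \<longrightarrow> x' \<in> c x \<longrightarrow> x \<in> c x' \<longrightarrow> c x = c x')"
proof -
  obtain r :: "'a set rel" where r: "Well_order r" "Field r = UNIV" using well_ordering[where 'a="'a set"] by blast
  have wo: "wo_rel r" using r(1) by (simp add: wo_rel_def)
  define c where "c x = wo_rel.minim r {a \<in> C. x \<in> a}" for x
  have c1: "c x \<in> C \<and> x \<in> c x" if "x \<in> \<Union>C" for x
  proof -
    have "c x \<in> {a \<in> C. x \<in> a}" unfolding c_def
      by (rule wo_rel.minim_in[OF wo]) (use that r(2) in auto)
    then show ?thesis by simp
  qed
  have c2: "(c x, b) \<in> r" if "b \<in> C" "x \<in> b" for x b
    unfolding c_def by (rule wo_rel.minim_least[OF wo]) (use that r(2) in auto)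
  have anti: "antisym r" using wo_rel.ANTISYM[OF wo] .
  show ?thesis
  proof (intro exI conjI allI impI ballI)
    show "c x \<in> C" "x \<in> c x" if "x \<in> \<Union>C" for x using c1[OF that] by auto
    fix x x' assume a: "x \<in> \<Union>C" "x' \<in> \<Union>C" "x' \<in> c x" "x \<in> c x'"
    have "(c x', c x) \<in> r" using c2[of "c x" x'] c1[OF a(1)] a(3) by blast
    moreover have "(c x, c x') \<in> r" using c2[of "c x'" x] c1[OF a(2)] a(4) by blast
    ultimately show "c x = c x'" using anti unfolding antisym_def by blast
  qed
qed

locale sdev =
  fixes X :: "'a topology" and G :: "nat \<Rightarrow> 'a set set"
  assumes G1: "\<And>n W. W \<in> G n \<Longrightarrow> openin X W"
    and G2: "\<And>n. \<Union>(G n) = topspace X"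
    and G3: "\<And>n m W. n \<le> m \<Longrightarrow> W \<in> G m \<Longrightarrow> \<exists>W'\<in>G n. W \<subseteq> W'"
    and G4: "\<And>x U. x \<in> topspace X - isolated_pts X \<Longrightarrow> nbhd X x U \<Longrightarrow>
               \<exists>V i. nbhd X x V \<and> star V (G i) \<subseteq> U"
begin

lemma star_mono_G: "n \<le> m \<Longrightarrow> star A (G m) \<subseteq> star A (G n)"
proof
  fix w assume nm: "n \<le> m" and "w \<in> star A (G m)"
  then obtain T where T: "T \<in> G m" "T \<inter> A \<noteq> {}" "w \<in> T" unfolding star_def by blast
  then obtain T' where "T' \<in> G n" "T \<subseteq> T'" using G3[OF nm] by blast
  then show "w \<in> star A (G n)" using T unfolding star_def by blast
qed

lemma star_open: "openin X (star A (G n))"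
  unfolding star_def using G1 by blast

lemma star_sub: "star A (G n) \<subseteq> topspace X"
  using openin_subset[OF star_open] .

lemma self_star: "x \<in> topspace X \<Longrightarrow> x \<in> star {x} (G n)"
  using G2[of n] unfolding star_def by blast

lemma step:
  assumes x: "x \<in> topspace X - isolated_pts X" and U: "nbhd X x U"
  shows "\<exists>V m. nbhd X x V \<and> (\<forall>m'\<ge>m. star V (G m') \<subseteq> U)"
proof -
  obtain V i where "nbhd X x V" "star V (G i) \<subseteq> U" using G4[OF x U] by blast
  then show ?thesis using star_mono_G by blast
qed

definition N :: "nat \<Rightarrow> 'a \<Rightarrow> 'a set" where "N n x = star {x} (G n)"
definition S4 :: "nat \<Rightarrow> 'a \<Rightarrow> 'a set" where
  "S4 n x = star (star (star (N n x) (G n)) (G n)) (G n)"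

lemma S4_exists:
  assumes x: "x \<in> topspace X - isolated_pts X" and U: "nbhd X x U"
  shows "\<exists>m. S4 m x \<subseteq> U"
proof -
  obtain V1 m1 where V1: "nbhd X x V1" "\<And>m'. m' \<ge> m1 \<Longrightarrow> star V1 (G m') \<subseteq> U"
    using step[OF x U] by blast
  obtain V2 m2 where V2: "nbhd X x V2" "\<And>m'. m' \<ge> m2 \<Longrightarrow> star V2 (G m') \<subseteq> V1"
    using step[OF x V1(1)] by blast
  obtain V3 m3 where V3: "nbhd X x V3" "\<And>m'. m' \<ge> m3 \<Longrightarrow> star V3 (G m') \<subseteq> V2"
    using step[OF x V2(1)] by blast
  obtain V4 m4 where V4: "nbhd X x V4" "\<And>m'. m' \<ge> m4 \<Longrightarrow> star V4 (G m') \<subseteq> V3"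
    using step[OF x V3(1)] by blast
  define m where "m = max (max m1 m2) (max m3 m4)"
  have m: "m1 \<le> m" "m2 \<le> m" "m3 \<le> m" "m4 \<le> m" unfolding m_def by auto
  have "{x} \<subseteq> V4" using nbhd_mem[OF V4(1)] by simp
  then have "N m x \<subseteq> star V4 (G m)" unfolding N_def by (rule star_mono_set)
  also have "\<dots> \<subseteq> V3" using V4(2)[OF m(4)] .
  finally have "star (N m x) (G m) \<subseteq> star V3 (G m)" by (rule star_mono_set)
  also have "\<dots> \<subseteq> V2" using V3(2)[OF m(3)] .
  finally have "star (star (N m x) (G m)) (G m) \<subseteq> star V2 (G m)" by (rule star_mono_set)
  also have "\<dots> \<subseteq> V1" using V2(2)[OF m(2)] .
  finally have "S4 m x \<subseteq> star V1 (G m)" unfolding S4_def by (rule star_mono_set)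
  also have "\<dots> \<subseteq> U" using V1(2)[OF m(1)] .
  finally show ?thesis by blast
qed

lemma N_open: "openin X (N n x)" unfolding N_def by (rule star_open)

lemma star_incl_G: "star A (G n) \<subseteq> star (star A (G n)) (G n)"
  using star_incl[of "star A (G n)" "G n"] star_sub[of A n] G2[of n] by simp

lemma N_sub_S4: "N n x \<subseteq> S4 n x"
proof -
  have "N n x \<subseteq> star (N n x) (G n)" unfolding N_def by (rule star_incl_G)
  also have "\<dots> \<subseteq> star (star (N n x) (G n)) (G n)" by (rule star_incl_G)
  also have "\<dots> \<subseteq> S4 n x" unfolding S4_def by (rule star_incl_G)
  finally show ?thesis .
qed

lemma chain:
  assumes "z1 \<in> N n x" "z1 \<in> N n y" "z2 \<in> N n y" "z2 \<in> N n x'"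
  shows "x' \<in> S4 n x"
proof -
  have 1: "y \<in> star {z1} (G n)" using assms(2) star_sym unfolding N_def by fast
  have 2: "y \<in> star (N n x) (G n)" using star_step[OF _ 1] assms(1) unfolding N_def by blast
  have 3: "z2 \<in> star (star (N n x) (G n)) (G n)" using star_step[OF 2] assms(3) unfolding N_def by blast
  have 4: "x' \<in> star {z2} (G n)" using assms(4) star_sym unfolding N_def by fast
  show ?thesis unfolding S4_def using star_step[OF 3 4] .
qed

primrec A :: "('a \<Rightarrow> 'a set) \<Rightarrow> nat \<Rightarrow> 'a set" where
  "A c 0 = {}"
| "A c (Suc n) = A c n \<union> \<Union>(N n ` {x \<in> topspace X. x \<notin> A c n \<and> S4 n x \<subseteq> c x})"

definition Cn :: "('a \<Rightarrow> 'a set) \<Rightarrow> nat \<Rightarrow> 'a set" where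
  "Cn c n = {x \<in> topspace X. x \<notin> A c n \<and> S4 n x \<subseteq> c x}"

definition D :: "('a \<Rightarrow> 'a set) \<Rightarrow> 'a set \<Rightarrow> nat \<Rightarrow> 'a set" where
  "D c a n = \<Union>(N n ` {x \<in> Cn c n. c x = a})"

lemma A_mono: "n \<le> m \<Longrightarrow> A c n \<subseteq> A c m"
  by (induction m rule: dec_induct) auto

lemma N_sub_A: "x \<in> Cn c n \<Longrightarrow> N n x \<subseteq> A c (Suc n)"
  unfolding Cn_def by auto

lemma A_elem: "y \<in> A c n \<Longrightarrow> \<exists>j x. j < n \<and> x \<in> Cn c j \<and> y \<in> N j x"
proof (induction n)
  case 0 then show ?case by simp
next
  case (Suc n)
  then show ?case unfolding Cn_def by (auto, metis less_Suc_eq)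
qed

lemma stone:
  assumes Copen: "\<And>U. U \<in> C \<Longrightarrow> openin X U" and Ccov: "topspace X \<subseteq> \<Union>C"
  shows "\<exists>R. (\<forall>B\<in>R. openin X B \<and> (\<exists>U\<in>C. B \<subseteq> U)) \<and>
             (\<forall>x\<in>topspace X - isolated_pts X. x \<in> \<Union>R) \<and>
             (\<forall>x\<in>topspace X - isolated_pts X. \<exists>Q. openin X Q \<and> x \<in> Q \<and> finite {B\<in>R. B \<inter> Q \<noteq> {}})"
proof -
  from choice_cover[of C] obtain c where cA: "\<forall>x\<in>\<Union>C. c x \<in> C \<and> x \<in> c x"
    and cB: "\<forall>x x'. x \<in> \<Union>C \<longrightarrow> x' \<in> \<Union>C \<longrightarrow> x' \<in> c x \<longrightarrow> x \<in> c x' \<longrightarrow> c x = c x'"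
    by (elim exE conjE)
  have c1: "c x \<in> C \<and> x \<in> c x" if "x \<in> \<Union>C" for x using cA that by blast
  have c2: "c x = c x'" if "x \<in> \<Union>C" "x' \<in> \<Union>C" "x' \<in> c x" "x \<in> c x'" for x x'
    using cB that by blast
  define R where "R = {D c a n | a n. a \<in> C}"
  have cov: "\<exists>j x. x \<in> Cn c j \<and> y \<in> N j x" if y: "y \<in> topspace X - isolated_pts X" for y
  proof -
    have yC: "y \<in> \<Union>C" using y Ccov by blast
    have cy: "c y \<in> C" "y \<in> c y" using c1[OF yC] by auto
    then have "nbhd X y (c y)" using Copen by (intro nbhd_open) auto
    then obtain n where n: "S4 n y \<subseteq> c y" using S4_exists y by blast
    show ?thesis
    proof (cases "y \<in> A c n")
      case True then show ?thesis using A_elem by blast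
    next
      case False
      then have "y \<in> Cn c n" unfolding Cn_def using y n by auto
      moreover have "y \<in> N n y" unfolding N_def using self_star y by blast
      ultimately show ?thesis by blast
    qed
  qed
  have Cn_top: "x \<in> topspace X" if "x \<in> Cn c n" for x n using that unfolding Cn_def by blast
  have sep: "a = b" if s1: "D c a i \<inter> N i y \<noteq> {}" and s2: "D c b i \<inter> N i y \<noteq> {}" for a b i y
  proof -
    obtain x z1 where x: "x \<in> Cn c i" "c x = a" "z1 \<in> N i x" "z1 \<in> N i y"
      using s1 unfolding D_def by blast
    obtain x' z2 where x': "x' \<in> Cn c i" "c x' = b" "z2 \<in> N i x'" "z2 \<in> N i y"
      using s2 unfolding D_def by blast
    have "x' \<in> S4 i x" using chain[OF x(3) x(4) x'(4) x'(3)] .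
    moreover have "x \<in> S4 i x'" using chain[OF x'(3) x'(4) x(4) x(3)] .
    moreover have "S4 i x \<subseteq> c x" "S4 i x' \<subseteq> c x'" using x(1) x'(1) unfolding Cn_def by auto
    ultimately have "c x = c x'" using c2[of x x'] Cn_top[OF x(1)] Cn_top[OF x'(1)] Ccov by blast
    then show ?thesis using x x' by simp
  qed
  show ?thesis
  proof (rule exI[of _ R], intro conjI ballI)
    fix B assume "B \<in> R"
    then obtain a n where B: "B = D c a n" "a \<in> C" unfolding R_def by blast
    show "openin X B" unfolding B D_def using N_open by blast
    have "D c a n \<subseteq> a" unfolding D_def Cn_def using N_sub_S4 by blast
    then show "\<exists>U\<in>C. B \<subseteq> U" using B by blast
  next
    fix y assume y: "y \<in> topspace X - isolated_pts X"
    then obtain j x where jx: "x \<in> Cn c j" "y \<in> N j x" using cov by blast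
    have "c x \<in> C" using c1 Cn_top[OF jx(1)] Ccov by blast
    moreover have "y \<in> D c (c x) j" unfolding D_def using jx by blast
    ultimately show "y \<in> \<Union>R" unfolding R_def by blast
  next
    fix y assume y: "y \<in> topspace X - isolated_pts X"
    then obtain j x where jx: "x \<in> Cn c j" "y \<in> N j x" using cov by blast
    have "nbhd X y (N j x)" using N_open jx by (intro nbhd_open)
    then obtain V m where V: "nbhd X y V" "star V (G m) \<subseteq> N j x" using G4 y by blast
    then obtain W where W: "openin X W" "y \<in> W" "W \<subseteq> V" unfolding nbhd_def by blast
    define i0 where "i0 = max m (Suc j)"
    define Q where "Q = W \<inter> N i0 y"
    have far: "D c a i \<inter> W = {}" if ii: "i \<ge> i0" for a i
    proof (rule ccontr)
      assume "D c a i \<inter> W \<noteq> {}"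
      then obtain x' w where x': "x' \<in> Cn c i" "w \<in> N i x'" "w \<in> W" unfolding D_def by blast
      then obtain T where T: "T \<in> G i" "x' \<in> T" "w \<in> T" unfolding N_def star_def by blast
      obtain T' where T': "T' \<in> G m" "T \<subseteq> T'" using G3[OF _ T(1), of m] ii i0_def by auto
      have "T' \<subseteq> star V (G m)" using T' T W x' unfolding star_def by blast
      then have "x' \<in> N j x" using V T T' by blast
      then have "x' \<in> A c (Suc j)" using N_sub_A[OF jx(1)] by blast
      then have "x' \<in> A c i" using A_mono[of "Suc j" i] ii i0_def by auto
      then show False using x'(1) unfolding Cn_def by blast
    qed
    define f where "f i = (SOME a. a \<in> C \<and> D c a i \<inter> N i y \<noteq> {})" for i
    have "{B\<in>R. B \<inter> Q \<noteq> {}} \<subseteq> (\<lambda>i. D c (f i) i) ` {..<i0}"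
    proof
      fix B assume "B \<in> {B\<in>R. B \<inter> Q \<noteq> {}}"
      then obtain a i where B: "B = D c a i" "a \<in> C" "B \<inter> Q \<noteq> {}" unfolding R_def by blast
      have "i < i0" using far[of i a] B Q_def by (cases "i0 \<le> i") auto
      then have "N i0 y \<subseteq> N i y" unfolding N_def using star_mono_G by simp
      then have Ba: "D c a i \<inter> N i y \<noteq> {}" using B Q_def by blast
      then have "f i \<in> C \<and> D c (f i) i \<inter> N i y \<noteq> {}" unfolding f_def using B(2)
        by (metis (mono_tags, lifting) someI)
      then have "f i = a" using sep Ba by blast
      then show "B \<in> (\<lambda>i. D c (f i) i) ` {..<i0}" using B \<open>i < i0\<close> by auto
    qed
    then have "finite {B\<in>R. B \<inter> Q \<noteq> {}}" using finite_subset by blast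
    moreover have "openin X Q" unfolding Q_def using W N_open by blast
    moreover have "y \<in> Q" unfolding Q_def using W self_star y N_def by auto
    ultimately show "\<exists>Q. openin X Q \<and> y \<in> Q \<and> finite {B\<in>R. B \<inter> Q \<noteq> {}}" by blast
  qed
qed

end


lemma fwd:
  assumes t1: "t1_space X" and R: "has_regular_base_nonisol X"
  shows "has_strong_dev_nonisol X"
proof -
  obtain \<B> where base: "is_base X \<B>" and reg: "\<And>x. x \<in> topspace X - isolated_pts X \<Longrightarrow> regular_at X \<B> x"
    using R unfolding has_regular_base_nonisol_def by blast
  have Bopen: "\<And>B. B \<in> \<B> \<Longrightarrow> openin X B" using base unfolding is_base_def by blast
  have Bbase: "\<And>U x. openin X U \<Longrightarrow> x \<in> U \<Longrightarrow> \<exists>B\<in>\<B>. x \<in> B \<and> B \<subseteq> U"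
    using base unfolding is_base_def by blast
  define r where "r B = {B' \<in> \<B>. B \<subseteq> B'}" for B
  have other: "\<exists>z\<in>B. z \<noteq> x" if x: "x \<in> topspace X - isolated_pts X" and "openin X B" "x \<in> B" for x B
  proof (rule ccontr)
    assume "\<not> ?thesis"
    then have "B = {x}" using that by blast
    then show False using that unfolding isolated_pts_def by auto
  qed
  have finr: "finite (r B)" if x: "x \<in> topspace X - isolated_pts X" and B: "B \<in> \<B>" "x \<in> B" for x B
  proof -
    obtain z where z: "z \<in> B" "z \<noteq> x" using other[OF x Bopen[OF B(1)] B(2)] by blast
    have "openin X (topspace X - {z})" using t1 by (simp add: t1_space_openin_delete_alt)
    then have "nbhd X x (topspace X - {z})" using x z by (intro nbhd_open) auto
    then obtain V where V: "openin X V" "x \<in> V" "V \<subseteq> topspace X - {z}"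
      and F: "finite {B \<in> \<B>. B \<inter> V \<noteq> {} \<and> \<not> B \<subseteq> topspace X - {z}}"
      using reg[OF x] unfolding regular_at_def by blast
    have "r B \<subseteq> {B \<in> \<B>. B \<inter> V \<noteq> {} \<and> \<not> B \<subseteq> topspace X - {z}}"
      unfolding r_def using V z B by blast
    then show ?thesis using F finite_subset by blast
  qed
  have up: "\<exists>B\<in>\<B>. x \<in> B \<and> n \<le> card (r B)" if x: "x \<in> topspace X - isolated_pts X" for x n
  proof (induction n)
    case 0
    then show ?case using Bbase[of "topspace X" x] x by auto
  next
    case (Suc n)
    then obtain B where B: "B \<in> \<B>" "x \<in> B" "n \<le> card (r B)" by blast
    obtain z where z: "z \<in> B" "z \<noteq> x" using other[OF x Bopen[OF B(1)] B(2)] by blast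
    have "openin X (B - {z})" using t1 Bopen[OF B(1)] by (simp add: t1_space_openin_delete_alt)
    then obtain B2 where B2: "B2 \<in> \<B>" "x \<in> B2" "B2 \<subseteq> B - {z}" using Bbase[of "B - {z}" x] z B by blast
    have sub: "insert B2 (r B) \<subseteq> r B2" unfolding r_def using B2 by auto
    have nin: "B2 \<notin> r B" unfolding r_def using B2 z by auto
    have "Suc n \<le> card (insert B2 (r B))" using finr[OF x B(1,2)] nin B(3) by simp
    also have "\<dots> \<le> card (r B2)" using card_mono[OF finr[OF x B2(1,2)] sub] .
    finally show ?case using B2 by blast
  qed
  define \<W> where "\<W> n = {B \<in> \<B>. n \<le> card (r B)} \<union> {{y} | y. y \<in> isolated_pts X}" for n
  have cov: "open_cover X (\<W> n)" for n
  proof -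
    have "openin X W" if "W \<in> \<W> n" for W
      using that Bopen unfolding \<W>_def isolated_pts_def by auto
    moreover have "\<Union>(\<W> n) \<subseteq> topspace X" using calculation openin_subset by blast
    moreover have "topspace X \<subseteq> \<Union>(\<W> n)"
    proof
      fix x assume x: "x \<in> topspace X"
      show "x \<in> \<Union>(\<W> n)"
      proof (cases "x \<in> isolated_pts X")
        case True then show ?thesis unfolding \<W>_def by blast
      next
        case False then show ?thesis using up[of x n] x unfolding \<W>_def by blast
      qed
    qed
    ultimately show ?thesis unfolding open_cover_def by blast
  qed
  have "strong_dev_nonisol X \<W>"
    unfolding strong_dev_nonisol_def
  proof (intro conjI ballI allI impI)
    show "open_cover X (\<W> i)" for i by (rule cov)
    show "{x} \<in> (\<Union>i. \<W> i)" if "x \<in> isolated_pts X" for x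
      using that unfolding \<W>_def by blast
    fix x U assume x: "x \<in> topspace X - isolated_pts X" and U: "nbhd X x U"
    then obtain V where V: "openin X V" "x \<in> V" "V \<subseteq> U"
      and F: "finite {B \<in> \<B>. B \<inter> V \<noteq> {} \<and> \<not> B \<subseteq> U}"
      using reg[OF x] unfolding regular_at_def by blast
    define F where "F = {B \<in> \<B>. B \<inter> V \<noteq> {} \<and> \<not> B \<subseteq> U}"
    define n where "n = Suc (\<Sum>B\<in>F. card (r B))"
    have "star V (\<W> n) \<subseteq> U"
    proof
      fix w assume "w \<in> star V (\<W> n)"
      then obtain T where T: "T \<in> \<W> n" "T \<inter> V \<noteq> {}" "w \<in> T" unfolding star_def by blast
      show "w \<in> U"
      proof (cases "T \<in> \<B> \<and> n \<le> card (r T)")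
        case True
        show ?thesis
        proof (rule ccontr)
          assume "w \<notin> U"
          then have "T \<in> F" unfolding F_def using True T by blast
          then have "card (r T) \<le> (\<Sum>B\<in>F. card (r B))"
            using F unfolding F_def[symmetric] by (intro member_le_sum) auto
          then show False using True unfolding n_def by simp
        qed
      next
        case False
        then obtain y where "T = {y}" using T(1) unfolding \<W>_def by blast
        then show ?thesis using T V by auto
      qed
    qed
    moreover have "nbhd X x V" using V by (intro nbhd_open)
    ultimately show "\<exists>V i. nbhd X x V \<and> star V (\<W> i) \<subseteq> U" by blast
  qed
  then show ?thesis unfolding has_strong_dev_nonisol_def by blast
qed


primrec Gs :: "(nat \<Rightarrow> 'a set set) \<Rightarrow> nat \<Rightarrow> 'a set set" where
  "Gs W 0 = W 0"
| "Gs W (Suc n) = {A \<inter> V | A V. A \<in> Gs W n \<and> V \<in> W (Suc n)}"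

lemma bwd:
  assumes S: "has_strong_dev_nonisol X"
  shows "has_regular_base_nonisol X"
proof -
  obtain \<W> where W: "strong_dev_nonisol X \<W>" using S unfolding has_strong_dev_nonisol_def by blast
  have Wopen: "\<And>i T. T \<in> \<W> i \<Longrightarrow> openin X T" and Wcov: "\<And>i. \<Union>(\<W> i) = topspace X"
    using W unfolding strong_dev_nonisol_def open_cover_def by blast+
  have Wstrong: "\<And>x U. x \<in> topspace X - isolated_pts X \<Longrightarrow> nbhd X x U \<Longrightarrow>
      \<exists>V i. nbhd X x V \<and> star V (\<W> i) \<subseteq> U"
    using W unfolding strong_dev_nonisol_def by blast
  define G where "G = Gs \<W>"
  have G1: "openin X T" if "T \<in> G n" for n T
    using that unfolding G_def
  proof (induction n arbitrary: T)
    case 0 then show ?case using Wopen by simp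
  next
    case (Suc n) then show ?case using Wopen by auto
  qed
  have G2: "\<Union>(G n) = topspace X" for n
  proof (induction n)
    case 0 then show ?case using Wcov unfolding G_def by simp
  next
    case (Suc n)
    show ?case
    proof
      show "\<Union>(G (Suc n)) \<subseteq> topspace X" using G1 openin_subset by blast
      show "topspace X \<subseteq> \<Union>(G (Suc n))"
      proof
        fix x assume x: "x \<in> topspace X"
        then obtain A where A: "A \<in> G n" "x \<in> A" using Suc by blast
        obtain V where V: "V \<in> \<W> (Suc n)" "x \<in> V" using Wcov x by blast
        have "A \<inter> V \<in> G (Suc n)" using A V unfolding G_def by auto
        then show "x \<in> \<Union>(G (Suc n))" using A V by blast
      qed
    qed
  qed
  have Gref: "\<exists>V\<in>\<W> i. T \<subseteq> V" if "i \<le> n" "T \<in> G n" for i n T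
    using that unfolding G_def
  proof (induction n arbitrary: T)
    case 0 then show ?case by auto
  next
    case (Suc n)
    then obtain A V where AV: "T = A \<inter> V" "A \<in> Gs \<W> n" "V \<in> \<W> (Suc n)" by auto
    show ?case
    proof (cases "i = Suc n")
      case True then show ?thesis using AV by blast
    next
      case False
      then obtain V' where "V' \<in> \<W> i" "A \<subseteq> V'" using Suc.IH[OF _ AV(2)] Suc.prems by auto
      then show ?thesis using AV by blast
    qed
  qed
  have G3: "\<exists>T'\<in>G n. T \<subseteq> T'" if "n \<le> m" "T \<in> G m" for n m T
    using that
  proof (induction m arbitrary: T)
    case 0 then show ?case by auto
  next
    case (Suc m)
    show ?case
    proof (cases "n = Suc m")
      case True then show ?thesis using Suc.prems by blast
    next
      case False
      obtain A V where AV: "T = A \<inter> V" "A \<in> G m" "V \<in> \<W> (Suc m)"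
        using Suc.prems unfolding G_def by auto
      obtain T' where "T' \<in> G n" "A \<subseteq> T'" using Suc.IH[OF _ AV(2)] Suc.prems False by auto
      then show ?thesis using AV by blast
    qed
  qed
  have G4: "\<exists>V i. nbhd X x V \<and> star V (G i) \<subseteq> U"
    if x: "x \<in> topspace X - isolated_pts X" and U: "nbhd X x U" for x U
  proof -
    obtain V i where V: "nbhd X x V" "star V (\<W> i) \<subseteq> U" using Wstrong[OF x U] by blast
    have "star V (G i) \<subseteq> star V (\<W> i)"
    proof
      fix w assume "w \<in> star V (G i)"
      then obtain T where T: "T \<in> G i" "T \<inter> V \<noteq> {}" "w \<in> T" unfolding star_def by blast
      obtain T' where "T' \<in> \<W> i" "T \<subseteq> T'" using Gref[OF order.refl T(1)] by blast
      then show "w \<in> star V (\<W> i)" using T unfolding star_def by blast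
    qed
    then show ?thesis using V by blast
  qed
  interpret sdev X G
    by (unfold_locales) (use G1 G2 G3 G4 in auto)
  have st: "\<exists>R. (\<forall>B\<in>R. openin X B \<and> (\<exists>U\<in>G k. B \<subseteq> U)) \<and>
             (\<forall>x\<in>topspace X - isolated_pts X. x \<in> \<Union>R) \<and>
             (\<forall>x\<in>topspace X - isolated_pts X. \<exists>Q. openin X Q \<and> x \<in> Q \<and> finite {B\<in>R. B \<inter> Q \<noteq> {}})" for k
    by (rule stone) (use G1 G2 in auto)
  have "\<exists>R. \<forall>k. (\<forall>B\<in>R k. openin X B \<and> (\<exists>U\<in>G k. B \<subseteq> U)) \<and>
             (\<forall>x\<in>topspace X - isolated_pts X. x \<in> \<Union>(R k)) \<and>
             (\<forall>x\<in>topspace X - isolated_pts X. \<exists>Q. openin X Q \<and> x \<in> Q \<and> finite {B\<in>R k. B \<inter> Q \<noteq> {}})"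
    by (rule choice, rule allI, rule st)
  then obtain R where RR: "\<forall>k. (\<forall>B\<in>R k. openin X B \<and> (\<exists>U\<in>G k. B \<subseteq> U)) \<and>
             (\<forall>x\<in>topspace X - isolated_pts X. x \<in> \<Union>(R k)) \<and>
             (\<forall>x\<in>topspace X - isolated_pts X. \<exists>Q. openin X Q \<and> x \<in> Q \<and> finite {B\<in>R k. B \<inter> Q \<noteq> {}})"
    by (elim exE)
  have R1: "openin X B \<and> (\<exists>U\<in>G k. B \<subseteq> U)" if "B \<in> R k" for k B
    using spec[OF RR, of k] that by blast
  have R2: "x \<in> \<Union>(R k)" if "x \<in> topspace X - isolated_pts X" for k x
    using spec[OF RR, of k] that by blast
  have R3: "\<exists>Q. openin X Q \<and> x \<in> Q \<and> finite {B\<in>R k. B \<inter> Q \<noteq> {}}"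
    if "x \<in> topspace X - isolated_pts X" for k x
    using spec[OF RR, of k] that by blast
  define \<B> where "\<B> = (\<Union>k. R k) \<union> {{y} | y. y \<in> isolated_pts X}"
  have base: "is_base X \<B>"
    unfolding is_base_def
  proof (intro conjI ballI allI impI)
    fix B assume "B \<in> \<B>"
    then consider (a) k where "B \<in> R k" | (b) y where "B = {y}" "y \<in> isolated_pts X"
      unfolding \<B>_def by blast
    then show "openin X B"
    proof cases
      case a then show ?thesis using R1 by blast
    next
      case b then show ?thesis unfolding isolated_pts_def by simp
    qed
  next
    fix U x assume Ux: "openin X U \<and> x \<in> U"
    show "\<exists>B\<in>\<B>. x \<in> B \<and> B \<subseteq> U"
    proof (cases "x \<in> isolated_pts X")
      case True
      then have "{x} \<in> \<B>" unfolding \<B>_def by blast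
      then show ?thesis using Ux by blast
    next
      case False
      then have x: "x \<in> topspace X - isolated_pts X" using Ux openin_subset by blast
      have "nbhd X x U" using Ux by (intro nbhd_open) auto
      then obtain V m where V: "nbhd X x V" "star V (G m) \<subseteq> U" using G4[OF x] by blast
      from R2[OF x, of m] obtain B where B: "B \<in> R m" "x \<in> B" by blast
      from R1[OF B(1)] obtain T where T: "T \<in> G m" "B \<subseteq> T" by blast
      have xV: "x \<in> V" using nbhd_mem[OF V(1)] .
      have "T \<subseteq> star V (G m)" using T(1) T(2) B(2) xV unfolding star_def by blast
      then have BU: "B \<subseteq> U" using T(2) V(2) by blast
      have "B \<in> \<B>" using B(1) unfolding \<B>_def by blast
      then show ?thesis using B(2) BU by blast
    qed
  qed
  have reg: "regular_at X \<B> x" if x: "x \<in> topspace X - isolated_pts X" for x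
    unfolding regular_at_def
  proof (intro allI impI)
    fix U assume U: "nbhd X x U"
    obtain V0 m where V0: "nbhd X x V0" "star V0 (G m) \<subseteq> U" using G4[OF x U] by blast
    obtain W0 where W0: "openin X W0" "x \<in> W0" "W0 \<subseteq> V0" using V0(1) unfolding nbhd_def by blast
    have "V0 \<subseteq> topspace X" using V0(1) unfolding nbhd_def by blast
    then have "V0 \<subseteq> star V0 (G m)" using star_incl[of V0 "G m"] G2[of m] by simp
    then have V0U: "V0 \<subseteq> U" using V0(2) by blast
    have "\<forall>k. \<exists>Q. openin X Q \<and> x \<in> Q \<and> finite {B\<in>R k. B \<inter> Q \<noteq> {}}"
      using R3[OF x] by blast
    then have "\<exists>Q. \<forall>k. openin X (Q k) \<and> x \<in> Q k \<and> finite {B\<in>R k. B \<inter> Q k \<noteq> {}}"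
      by (rule choice)
    then obtain Q where Q: "\<forall>k. openin X (Q k) \<and> x \<in> Q k \<and> finite {B\<in>R k. B \<inter> Q k \<noteq> {}}"
      by (elim exE)
    have Qo: "openin X (Q k)" and Qx: "x \<in> Q k" and Qf: "finite {B\<in>R k. B \<inter> Q k \<noteq> {}}" for k
      using spec[OF Q, of k] by blast+
    define V where "V = W0 \<inter> \<Inter>(Q ` {..m})"
    have "openin X (\<Inter>(Q ` {..m}))" by (rule openin_Inter) (use Qo in auto)
    then have Vo: "openin X V" unfolding V_def using W0(1) by (rule openin_Int[rotated])
    have Vx: "x \<in> V" unfolding V_def using Qx W0(2) by blast
    have VW0: "V \<subseteq> W0" unfolding V_def by blast
    have VQ: "V \<subseteq> Q k" if "k \<le> m" for k unfolding V_def using that by blast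
    have VU: "V \<subseteq> U" using VW0 W0(3) V0U by blast
    have "{B \<in> \<B>. B \<inter> V \<noteq> {} \<and> \<not> B \<subseteq> U} \<subseteq> (\<Union>k\<in>{..<m}. {B\<in>R k. B \<inter> Q k \<noteq> {}})"
    proof
      fix B assume B: "B \<in> {B \<in> \<B>. B \<inter> V \<noteq> {} \<and> \<not> B \<subseteq> U}"
      then have BB: "B \<in> \<B>" and BV: "B \<inter> V \<noteq> {}" and BU: "\<not> B \<subseteq> U" by auto
      show "B \<in> (\<Union>k\<in>{..<m}. {B\<in>R k. B \<inter> Q k \<noteq> {}})"
      proof (cases "\<exists>k. B \<in> R k")
        case False
        then obtain y where y: "B = {y}" using BB unfolding \<B>_def by blast
        then have "y \<in> V" using BV by blast
        then have "B \<subseteq> U" using y VU by blast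
        then show ?thesis using BU by blast
      next
        case True
        then obtain k where k: "B \<in> R k" by blast
        have "k < m"
        proof (rule ccontr)
          assume "\<not> k < m"
          then have km: "m \<le> k" by simp
          from R1[OF k] obtain T where T: "T \<in> G k" "B \<subseteq> T" by blast
          from G3[OF km T(1)] obtain T' where T': "T' \<in> G m" "T \<subseteq> T'" by blast
          have "B \<inter> V0 \<noteq> {}" using BV VW0 W0(3) by blast
          then have "T' \<inter> V0 \<noteq> {}" using T(2) T'(2) by blast
          then have "T' \<subseteq> star V0 (G m)" using T'(1) unfolding star_def by blast
          then have "B \<subseteq> U" using T(2) T'(2) V0(2) by blast
          then show False using BU by blast
        qed
        moreover have "B \<inter> Q k \<noteq> {}" using BV VQ[of k] \<open>k < m\<close> by auto
        ultimately show ?thesis using k by blast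
      qed
    qed
    moreover have "finite (\<Union>k\<in>{..<m}. {B\<in>R k. B \<inter> Q k \<noteq> {}})"
      by (rule finite_UN_I) (simp_all add: Qf)
    ultimately have "finite {B \<in> \<B>. B \<inter> V \<noteq> {} \<and> \<not> B \<subseteq> U}" by (rule finite_subset)
    then show "\<exists>V. openin X V \<and> x \<in> V \<and> V \<subseteq> U \<and> finite {B \<in> \<B>. B \<inter> V \<noteq> {} \<and> \<not> B \<subseteq> U}"
      using Vo Vx VU by blast
  qed
  show ?thesis unfolding has_regular_base_nonisol_def using base reg by blast
qed


theorem mainTheorem5:
  fixes X :: "'a topology"
  assumes "t1_space X"
  shows "has_regular_base_nonisol X \<longleftrightarrow> has_strong_dev_nonisol X"
  using fwd[OF assms] bwd by blast

end
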